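(* For integers $s,t\ge0$ let $m_{i,j}^{s,t}=\int_{(0,1)^2}\frac{x^{s+i}y^{s+j}}{x+y}\left(\frac{1-x}{1+x}\right)^t\left(\frac{1-y}{1+y}\right)^tdx\,dy$, $\phi_i^{s,t}=\sqrt2\int_0^1\frac{x^{s+i}}{1+x}\left(\frac{1-x}{1+x}\right)^tdx$, $\tau_n^{s,t}=\det(m_{i,j}^{s,t})_{i,j=0}^{n-1}$ ($\tau_0^{s,t}=1$), and $$\sigma_n^{s,t}=\det\begin{pmatrix} m_{0,0}^{s,t}&\cdots&m_{0,n-1}^{s,t}&\phi_0^{s,t}\\ \vdots&&\vdots&\vdots\\ m_{n,0}^{s,t}&\cdots&m_{n,n-1}^{s,t}&\phi_n^{s,t}\end{pmatrix}\quad(n\ge0),$$ and let $P_n^{s,t}(x)=\frac{1}{\tau_n^{s,t}}\det\begin{pmatrix} m_{0,0}^{s,t}&\cdots&m_{0,n-1}^{s,t}&1\\ \vdots&&\vdots&\vdots\\ m_{n,0}^{s,t}&\cdots&m_{n,n-1}^{s,t}&x^n\end{pmatrix}$, $P_0^{s,t}=1$. Then for every $n\ge1$ and $s,t\ge0$ with $\sigma_{n-1}^{s,t}\neq0$, $$P_n^{s,t+1}(x)+d_n^{s,t}P_{n-1}^{s,t+1}(x)=P_n^{s,t}(x)+e_n^{s,t}P_{n-1}^{s,t}(x),$$ where $$d_n^{s,t}=-\frac{\sigma_n^{s,t}\tau_{n-1}^{s,t+1}}{\sigma_{n-1}^{s,t}\tau_n^{s,t+1}},\qquad e_n^{s,t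}=-\frac{\sigma_n^{s,t}\tau_{n-1}^{s,t}}{\sigma_{n-1}^{s,t}\tau_n^{s,t}}.$$
   Context: Here $m_{i,j}^{s,t}=\langle x^i,y^j\rangle_{s,t}$ for the bilinear form $\langle f,g\rangle_{s,t}=\int_{(0,1)^2}\frac{x^sy^s}{x+y}f(x)g(y)\left(\frac{1-x}{1+x}\right)^t\left(\frac{1-y}{1+y}\right)^tdx\,dy$, and $\phi_i^{s,t}=\mathcal L_{s,t}(x^i)$ for the functional $\mathcal L_{s,t}(f)=\sqrt2\int_0^1\frac{x^s}{1+x}f(x)\left(\frac{1-x}{1+x}\right)^tdx$. The determinants $\tau_n^{s,t}$ are positive; $P_n^{s,t}$ is the monic Cauchy–Jacobi bi-orthogonal polynomial of degree $n$. The condition $\sigma_{n-1}^{s,t}\ne0$ is only what is needed for the coefficients to be defined. *)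

theory Defs
  imports "HOL-Analysis.Analysis" "Jordan_Normal_Form.Determinant"
begin

definition mom :: "nat \<Rightarrow> nat \<Rightarrow> nat \<Rightarrow> nat \<Rightarrow> real" where
  "mom s t i j = (LINT p : {0<..<1::real} \<times> {0<..<1::real} | lborel.
      (fst p ^ (s + i) * snd p ^ (s + j) / (fst p + snd p))
      * ((1 - fst p) / (1 + fst p)) ^ t * ((1 - snd p) / (1 + snd p)) ^ t)"

definition phi :: "nat \<Rightarrow> nat \<Rightarrow> nat \<Rightarrow> real" where
  "phi s t i = sqrt 2 * (LINT x : {0<..<1::real} | lborel.
      x ^ (s + i) / (1 + x) * ((1 - x) / (1 + x)) ^ t)"

definition tau :: "nat \<Rightarrow> nat \<Rightarrow> nat \<Rightarrow> real" where
  "tau s t n = Determinant.det (Matrix.mat n n (\<lambda>(i, j). mom s t i j))"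

definition sigma :: "nat \<Rightarrow> nat \<Rightarrow> nat \<Rightarrow> real" where
  "sigma s t n = Determinant.det (Matrix.mat (Suc n) (Suc n)
      (\<lambda>(i, j). if j < n then mom s t i j else phi s t i))"

definition Pn :: "nat \<Rightarrow> nat \<Rightarrow> nat \<Rightarrow> real \<Rightarrow> real" where
  "Pn s t n x = (if n = 0 then 1 else
      Determinant.det (Matrix.mat (Suc n) (Suc n)
        (\<lambda>(i, j). if j < n then mom s t i j else x ^ i)) / tau s t n)"

definition dcoef :: "nat \<Rightarrow> nat \<Rightarrow> nat \<Rightarrow> real" where
  "dcoef s t n = - (sigma s t n * tau s (Suc t) (n - 1)) / (sigma s t (n - 1) * tau s (Suc t) n)"

definition ecoef :: "nat \<Rightarrow> nat \<Rightarrow> nat \<Rightarrow> real" where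
  "ecoef s t n = - (sigma s t n * tau s t (n - 1)) / (sigma s t (n - 1) * tau s t n)"

end

theory Submission
  imports Defs "HOL-Computational_Algebra.Polynomial"
begin


definition bmat :: "(nat \<Rightarrow> nat \<Rightarrow> real) \<Rightarrow> nat \<Rightarrow> (nat \<Rightarrow> real) \<Rightarrow> real mat" where
  "bmat F n v = Matrix.mat (Suc n) (Suc n) (\<lambda>(i, j). if j < n then F i j else v i)"

definition Kc :: "(nat \<Rightarrow> nat \<Rightarrow> real) \<Rightarrow> nat \<Rightarrow> nat \<Rightarrow> real" where
  "Kc F n i = cofactor (bmat F n (\<lambda>_. 0)) i n"

lemma bmat_carrier[simp]: "bmat F n v \<in> carrier_mat (Suc n) (Suc n)"
  unfolding bmat_def by simp

lemma cof_indep: "i < Suc n \<Longrightarrow> cofactor (bmat F n v) i n = Kc F n i"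
  unfolding Kc_def cofactor_def
  by (rule arg_cong[where f="\<lambda>A. (-1)^(i+n) * det A"], rule eq_matI)
     (auto simp: mat_delete_def bmat_def)

lemma L1: "det (bmat F n v) = (\<Sum>i<Suc n. v i * Kc F n i)"
proof -
  have "det (bmat F n v) = (\<Sum>i<Suc n. bmat F n v $$ (i,n) * cofactor (bmat F n v) i n)"
    using laplace_expansion_column[OF bmat_carrier[of F n v], of n] by simp
  also have "\<dots> = (\<Sum>i<Suc n. v i * Kc F n i)"
    by (rule sum.cong, simp) (subst cof_indep, simp, simp add: bmat_def)
  finally show ?thesis .
qed

lemma L2: assumes "j < n" shows "(\<Sum>i<Suc n. F i j * Kc F n i) = 0"
proof -
  have "(\<Sum>i<Suc n. F i j * Kc F n i) = det (bmat F n (\<lambda>i. F i j))" by (simp add: L1)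
  also have "\<dots> = 0"
    by (rule det_identical_columns[OF bmat_carrier, of j n]) 
       (use assms in \<open>auto simp: bmat_def\<close>)
  finally show ?thesis .
qed

lemma L3: "Kc F n n = det (Matrix.mat n n (\<lambda>(i, j). F i j))"
  unfolding Kc_def cofactor_def
  by (simp, rule arg_cong[where f=det], rule eq_matI) (auto simp: mat_delete_def bmat_def)

lemma sig_inv:
  assumes FF: "\<And>i j. F' i j = F i j - \<phi> i * \<phi> j"
  shows "det (bmat F' n \<phi>) = det (bmat F n \<phi>)"
proof -
  define U :: "real mat" where "U = Matrix.mat (Suc n) (Suc n) (\<lambda>(i, j). if i = j then 1 else if i = n then - \<phi> j else 0)"
  have Uc: "U \<in> carrier_mat (Suc n) (Suc n)" unfolding U_def by simp
  have dU: "det U = 1"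
  proof -
    have "det U = prod_list (diag_mat U)"
      by (rule det_lower_triangular[OF _ Uc]) (auto simp: U_def)
    also have "diag_mat U = map (\<lambda>_. 1) [0..<Suc n]"
      unfolding diag_mat_def U_def by (auto simp: map_eq_conv)
    finally show ?thesis by (simp add: map_replicate_const)
  qed
  have eq: "bmat F' n \<phi> = bmat F n \<phi> * U"
  proof (rule eq_matI)
    fix i j assume i: "i < dim_row (bmat F n \<phi> * U)" and j: "j < dim_col (bmat F n \<phi> * U)"
    then have i': "i < Suc n" and j': "j < Suc n" using Uc by (auto simp: bmat_def)
    have "(bmat F n \<phi> * U) $$ (i, j) = row (bmat F n \<phi>) i \<bullet> col U j"
      using i' j' Uc by (simp add: bmat_def)
    also have "\<dots> = (\<Sum>k\<in>{0..<Suc n}. bmat F n \<phi> $$ (i,k) * U $$ (k,j))"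
      unfolding scalar_prod_def using Uc i' j' by (intro sum.cong) (auto simp: bmat_def)
    also have "\<dots> = (\<Sum>k<n. bmat F n \<phi> $$ (i,k) * U $$ (k,j)) + \<phi> i * U $$ (n, j)"
      using i' by (simp add: atLeast0LessThan bmat_def)
    also have "\<dots> = bmat F' n \<phi> $$ (i, j)"
    proof (cases "j < n")
      case True
      have "(\<Sum>k<n. bmat F n \<phi> $$ (i,k) * U $$ (k,j)) = (\<Sum>k<n. if k = j then F i j else 0)"
        by (rule sum.cong) (use i' j' True in \<open>auto simp: bmat_def U_def\<close>)
      then show ?thesis using True i' j' by (simp add: bmat_def U_def FF)
    next
      case False
      then have jn: "j = n" using j' by auto
      have "(\<Sum>k<n. bmat F n \<phi> $$ (i,k) * U $$ (k,j)) = 0"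
        by (rule sum.neutral) (use i' jn in \<open>auto simp: bmat_def U_def\<close>)
      then show ?thesis using jn i' by (simp add: bmat_def U_def)
    qed
    finally show "bmat F' n \<phi> $$ (i, j) = (bmat F n \<phi> * U) $$ (i, j)" by simp
  qed (use Uc in \<open>auto simp: bmat_def\<close>)
  show ?thesis unfolding eq det_mult[OF bmat_carrier Uc] dU by simp
qed

lemma alg_main:
  fixes F F' :: "nat \<Rightarrow> nat \<Rightarrow> real" and \<phi> X :: "nat \<Rightarrow> real"
  assumes FF: "\<And>i j. F' i j = F i j - \<phi> i * \<phi> j"
  and tn: "det (Matrix.mat (Suc m) (Suc m) (\<lambda>(i, j). F i j)) \<noteq> 0"
  and tm: "det (Matrix.mat m m (\<lambda>(i, j). F i j)) \<noteq> 0"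
  and tn': "det (Matrix.mat (Suc m) (Suc m) (\<lambda>(i, j). F' i j)) \<noteq> 0"
  and tm': "det (Matrix.mat m m (\<lambda>(i, j). F' i j)) \<noteq> 0"
  and sm: "det (bmat F m \<phi>) \<noteq> 0"
  shows "det (bmat F' (Suc m) X) / det (Matrix.mat (Suc m) (Suc m) (\<lambda>(i, j). F' i j))
     + (- (det (bmat F (Suc m) \<phi>) * det (Matrix.mat m m (\<lambda>(i, j). F' i j)))
        / (det (bmat F m \<phi>) * det (Matrix.mat (Suc m) (Suc m) (\<lambda>(i, j). F' i j))))
       * (det (bmat F' m X) / det (Matrix.mat m m (\<lambda>(i, j). F' i j)))
   = det (bmat F (Suc m) X) / det (Matrix.mat (Suc m) (Suc m) (\<lambda>(i, j). F i j))
     + (- (det (bmat F (Suc m) \<phi>) * det (Matrix.mat m m (\<lambda>(i, j). F i j)))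
        / (det (bmat F m \<phi>) * det (Matrix.mat (Suc m) (Suc m) (\<lambda>(i, j). F i j))))
       * (det (bmat F m X) / det (Matrix.mat m m (\<lambda>(i, j). F i j)))"
proof -
  define Tn where "Tn = det (Matrix.mat (Suc m) (Suc m) (\<lambda>(i, j). F i j))"
  define Tm where "Tm = det (Matrix.mat m m (\<lambda>(i, j). F i j))"
  define Tn' where "Tn' = det (Matrix.mat (Suc m) (Suc m) (\<lambda>(i, j). F' i j))"
  define Tm' where "Tm' = det (Matrix.mat m m (\<lambda>(i, j). F' i j))"
  define Sn where "Sn = det (bmat F (Suc m) \<phi>)"
  define Sm where "Sm = det (bmat F m \<phi>)"
  define C where "C = Kc F (Suc m)"
  define C' where "C' = Kc F' (Suc m)"
  define E where "E = (\<lambda>i. if i < Suc m then Kc F m i else 0)"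
  define E' where "E' = (\<lambda>i. if i < Suc m then Kc F' m i else 0)"
  define N where "N = Suc (Suc m)"
  note nz = tn[folded Tn_def] tm[folded Tm_def] tn'[folded Tn'_def] tm'[folded Tm'_def] sm[folded Sm_def]
  have dC: "det (bmat F (Suc m) v) = (\<Sum>i<N. v i * C i)" for v
    unfolding C_def N_def by (rule L1)
  have dC': "det (bmat F' (Suc m) v) = (\<Sum>i<N. v i * C' i)" for v
    unfolding C'_def N_def by (rule L1)
  have dE: "det (bmat F m v) = (\<Sum>i<N. v i * E i)" for v
    unfolding E_def N_def by (simp add: L1)
  have dE': "det (bmat F' m v) = (\<Sum>i<N. v i * E' i)" for v
    unfolding E'_def N_def by (simp add: L1)
  have Sn': "det (bmat F' (Suc m) \<phi>) = Sn" unfolding Sn_def by (rule sig_inv[OF FF])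
  have Sm': "det (bmat F' m \<phi>) = Sm" unfolding Sm_def by (rule sig_inv[OF FF])
  have CN: "C (Suc m) = Tn" unfolding C_def Tn_def by (rule L3)
  have CN': "C' (Suc m) = Tn'" unfolding C'_def Tn'_def by (rule L3)
  have oC: "(\<Sum>i<N. F i j * C i) = 0" if "j < Suc m" for j
    unfolding C_def N_def using L2 that by blast
  have oC': "(\<Sum>i<N. F' i j * C' i) = 0" if "j < Suc m" for j
    unfolding C'_def N_def using L2 that by blast
  have oE: "(\<Sum>i<N. F i j * E i) = 0" if "j < m" for j
    unfolding E_def N_def using L2[OF that, of F] by simp
  have oE': "(\<Sum>i<N. F' i j * E' i) = 0" if "j < m" for j
    unfolding E'_def N_def using L2[OF that, of F'] by simp
  define V where "V = (\<lambda>i. C' i / Tn' - Sn / (Sm * Tn') * E' i - C i / Tn + Sn / (Sm * Tn) * E i)"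
  have SV: "(\<Sum>i<N. w i * V i) = (\<Sum>i<N. w i * C' i) / Tn' - Sn / (Sm * Tn') * (\<Sum>i<N. w i * E' i)
      - (\<Sum>i<N. w i * C i) / Tn + Sn / (Sm * Tn) * (\<Sum>i<N. w i * E i)" for w
    unfolding V_def by (simp add: algebra_simps sum.distrib sum_subtractf sum_distrib_left sum_divide_distrib)
  have VN: "V (Suc m) = 0" unfolding V_def using CN CN' nz by (simp add: E_def E'_def)
  have Fsplit: "(\<Sum>i<N. F i j * C' i) = \<phi> j * Sn" if "j < Suc m" for j
  proof -
    have "(\<Sum>i<N. F i j * C' i) = (\<Sum>i<N. F' i j * C' i + \<phi> j * (\<phi> i * C' i))"
      by (rule sum.cong) (simp_all add: FF algebra_simps)
    also have "\<dots> = (\<Sum>i<N. F' i j * C' i) + \<phi> j * (\<Sum>i<N. \<phi> i * C' i)"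
      by (simp add: sum.distrib sum_distrib_left)
    finally have "(\<Sum>i<N. F i j * C' i) = (\<Sum>i<N. F' i j * C' i) + \<phi> j * (\<Sum>i<N. \<phi> i * C' i)" .
    then show ?thesis using oC'[OF that] dC'[of \<phi>] Sn' by simp
  qed
  have FsplitE: "(\<Sum>i<N. F i j * E' i) = \<phi> j * Sm" if "j < m" for j
  proof -
    have "(\<Sum>i<N. F i j * E' i) = (\<Sum>i<N. F' i j * E' i + \<phi> j * (\<phi> i * E' i))"
      by (rule sum.cong) (simp_all add: FF algebra_simps)
    also have "\<dots> = (\<Sum>i<N. F' i j * E' i) + \<phi> j * (\<Sum>i<N. \<phi> i * E' i)"
      by (simp add: sum.distrib sum_distrib_left)
    finally have "(\<Sum>i<N. F i j * E' i) = (\<Sum>i<N. F' i j * E' i) + \<phi> j * (\<Sum>i<N. \<phi> i * E' i)" .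
    then show ?thesis using oE'[OF that] dE'[of \<phi>] Sm' by simp
  qed
  have Vorth: "(\<Sum>i<N. (if j < m then F i j else \<phi> i) * V i) = 0" if "j < Suc m" for j
  proof (cases "j < m")
    case True
    then show ?thesis unfolding SV using Fsplit[OF that] FsplitE[OF True] oC[OF that] oE[OF True] nz
      by (simp add: field_simps)
  next
    case False
    then show ?thesis unfolding SV using dC[of \<phi>] dC'[of \<phi>] dE[of \<phi>] dE'[of \<phi>] Sn' Sm' nz
      by (simp add: Sn_def[symmetric] Sm_def[symmetric] field_simps)
  qed
  have V0: "V i = 0" if "i < Suc m" for i
  proof -
    define A where "A = bmat F m \<phi>"
    have Ac: "transpose_mat A \<in> carrier_mat (Suc m) (Suc m)" unfolding A_def by simp
    have "det (transpose_mat A) \<noteq> 0" using nz det_transpose[OF bmat_carrier] unfolding A_def Sm_def by simp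
    then have nex: "\<not> (\<exists>v. v \<in> carrier_vec (Suc m) \<and> v \<noteq> 0\<^sub>v (Suc m) \<and> transpose_mat A *\<^sub>v v = 0\<^sub>v (Suc m))"
      using det_0_iff_vec_prod_zero_field[OF Ac] by blast
    have "transpose_mat A *\<^sub>v vec (Suc m) V = 0\<^sub>v (Suc m)"
    proof (rule eq_vecI)
      fix j assume "j < dim_vec (0\<^sub>v (Suc m) :: real vec)"
      then have j: "j < Suc m" by simp
      have "(transpose_mat A *\<^sub>v vec (Suc m) V) $ j = (\<Sum>i\<in>{0..<Suc m}. A $$ (i, j) * V i)"
        using j unfolding A_def by (auto simp: bmat_def scalar_prod_def intro!: sum.cong)
      also have "\<dots> = (\<Sum>i<N. (if j < m then F i j else \<phi> i) * V i)"
        unfolding N_def using j VN by (simp add: atLeast0LessThan A_def bmat_def)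
      also have "\<dots> = 0" using Vorth[OF j] .
      finally show "(transpose_mat A *\<^sub>v vec (Suc m) V) $ j = 0\<^sub>v (Suc m) $ j" using j by simp
    qed (simp add: A_def bmat_def)
    then have "vec (Suc m) V = 0\<^sub>v (Suc m)" using nex vec_carrier[of "Suc m" V] by blast
    then show ?thesis using that by (metis index_vec index_zero_vec(1))
  qed
  have "(\<Sum>i<N. X i * V i) = 0"
    by (rule sum.neutral) (use V0 VN in \<open>auto simp: N_def less_Suc_eq\<close>)
  then show ?thesis unfolding SV
    unfolding Tn_def[symmetric] Tm_def[symmetric] Tn'_def[symmetric] Tm'_def[symmetric]
        Sn_def[symmetric] Sm_def[symmetric] unfolding dC dC' dE dE' using nz
    by (simp add: field_simps) (simp add: distrib_left[symmetric])
qed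



lemma prod_integrable_lborel:
  fixes G H :: "real \<Rightarrow> real"
  assumes G: "integrable lborel G" and H: "integrable lborel H"
  shows "integrable (lborel :: (real \<times> real) measure) (\<lambda>p. G (fst p) * H (snd p))"
    and "(\<integral>p. G (fst p) * H (snd p) \<partial>(lborel :: (real \<times> real) measure)) = integral\<^sup>L lborel G * integral\<^sup>L lborel H"
proof -
  have mG[measurable]: "G \<in> borel_measurable lborel" using G by auto
  have mH[measurable]: "H \<in> borel_measurable lborel" using H by auto
  have I: "integrable (lborel \<Otimes>\<^sub>M lborel) (\<lambda>p. G (fst p) * H (snd p))"
  proof (rule lborel_pair.Fubini_integrable)
    show "(\<lambda>p. G (fst p) * H (snd p)) \<in> borel_measurable (lborel \<Otimes>\<^sub>M lborel)" by measurable
    have "integrable lborel (\<lambda>x. norm (G x) * (\<integral>y. norm (H y) \<partial>lborel))"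
      using G by (intro integrable_mult_left) auto
    then show "integrable lborel (\<lambda>x. \<integral>y. norm (G (fst (x, y)) * H (snd (x, y))) \<partial>lborel)"
      by (simp add: abs_mult)
    show "AE x in lborel. integrable lborel (\<lambda>y. G (fst (x, y)) * H (snd (x, y)))"
      using H by simp
  qed
  then show "integrable (lborel :: (real \<times> real) measure) (\<lambda>p. G (fst p) * H (snd p))"
    by (simp add: lborel_prod)
  have "(\<integral>p. G (fst p) * H (snd p) \<partial>(lborel \<Otimes>\<^sub>M lborel)) = (\<integral>x. (\<integral>y. G x * H y \<partial>lborel) \<partial>lborel)"
    using lborel_pair.integral_fst'[OF I] by simp
  also have "\<dots> = integral\<^sup>L lborel G * integral\<^sup>L lborel H" by simp
  finally show "(\<integral>p. G (fst p) * H (snd p) \<partial>(lborel :: (real \<times> real) measure)) = integral\<^sup>L lborel G * integral\<^sup>L lborel H"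
    by (simp add: lborel_prod)
qed

lemma set_prod:
  fixes g h :: "real \<Rightarrow> real"
  assumes g: "set_integrable lborel S g" and h: "set_integrable lborel T h"
  shows "set_integrable lborel (S \<times> T) (\<lambda>p. g (fst p) * h (snd p))"
    and "(LINT p : S \<times> T | lborel. g (fst p) * h (snd p)) = (LINT x : S | lborel. g x) * (LINT y : T | lborel. h y)"
proof -
  define G where "G x = indicator S x * g x" for x
  define H where "H x = indicator T x * h x" for x
  have G: "integrable lborel G" using g unfolding set_integrable_def G_def by simp
  have H: "integrable lborel H" using h unfolding set_integrable_def H_def by simp
  have eq: "(\<lambda>p. indicator (S \<times> T) p *\<^sub>R (g (fst p) * h (snd p))) = (\<lambda>p. G (fst p) * H (snd p))"
    by (auto simp: G_def H_def indicator_times fun_eq_iff split: split_indicator)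
  show "set_integrable lborel (S \<times> T) (\<lambda>p. g (fst p) * h (snd p))"
    unfolding set_integrable_def eq by (rule prod_integrable_lborel[OF G H])
  show "(LINT p : S \<times> T | lborel. g (fst p) * h (snd p)) = (LINT x : S | lborel. g x) * (LINT y : T | lborel. h y)"
    unfolding set_lebesgue_integral_def eq using prod_integrable_lborel(2)[OF G H]
    by (simp add: G_def[abs_def] H_def[abs_def])
qed

lemma int_powr: "set_integrable lborel {0<..<1::real} (\<lambda>x. x powr (-1/2))"
proof -
  have "(\<lambda>x::real. x powr (-1/2)) integrable_on {0<..1}"
    by (rule integrable_on_powr_from_0') auto
  then have "set_integrable lebesgue {0<..1::real} (\<lambda>x. x powr (-1/2))"
    by (rule nonnegative_absolutely_integrable) auto
  then have "set_integrable lborel {0<..1::real} (\<lambda>x. x powr (-1/2))"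
    unfolding set_integrable_def by (subst (asm) integrable_completion) measurable
  then show ?thesis by (rule set_integrable_subset) auto
qed

definition Fm :: "nat \<Rightarrow> nat \<Rightarrow> nat \<Rightarrow> nat \<Rightarrow> real \<times> real \<Rightarrow> real" where
  "Fm s t i j p = (fst p ^ (s + i) * snd p ^ (s + j) / (fst p + snd p))
      * ((1 - fst p) / (1 + fst p)) ^ t * ((1 - snd p) / (1 + snd p)) ^ t"

definition Gf :: "nat \<Rightarrow> nat \<Rightarrow> nat \<Rightarrow> real \<Rightarrow> real" where
  "Gf s t i x = x ^ (s + i) / (1 + x) * ((1 - x) / (1 + x)) ^ t"

abbreviation "Sq \<equiv> {0<..<1::real} \<times> {0<..<1::real}"

lemma mom_Fm: "mom s t i j = (LINT p : Sq | lborel. Fm s t i j p)"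
  unfolding mom_def Fm_def by simp

lemma phi_Gf: "phi s t i = sqrt 2 * (LINT x : {0<..<1} | lborel. Gf s t i x)"
  unfolding phi_def Gf_def by simp

lemma sqrt_bound:
  fixes x y :: real assumes "0 < x" "0 < y"
  shows "1 / (x + y) \<le> x powr (-1/2) * y powr (-1/2)"
proof -
  have "sqrt x * sqrt y \<le> x + y"
  proof -
    have "0 \<le> (sqrt x - sqrt y)^2" by simp
    then have "2 * (sqrt x * sqrt y) \<le> x + y" using assms by (simp add: power2_eq_square algebra_simps)
    moreover have "0 \<le> sqrt x * sqrt y" using assms by simp
    ultimately show ?thesis by linarith
  qed
  moreover have "z powr (-1/2) = 1 / sqrt z" if "0 < z" for z :: real
  proof -
    have "z powr (-1/2) = inverse (z powr (1/2))" using powr_minus[of z "1/2"] by simp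
    also have "\<dots> = 1 / sqrt z" using that by (simp add: powr_half_sqrt inverse_eq_divide)
    finally show ?thesis .
  qed
  then have "x powr (-1/2) * y powr (-1/2) = 1 / (sqrt x * sqrt y)" using assms by simp
  ultimately show ?thesis using assms by (simp add: frac_le)
qed

lemma Fm_bound:
  assumes "p \<in> Sq" shows "norm (Fm s t i j p) \<le> norm (fst p powr (-1/2) * snd p powr (-1/2))"
proof -
  obtain x y where p: "p = (x, y)" and x: "0 < x" "x < 1" and y: "0 < y" "y < 1" using assms by auto
  have a1: "\<bar>x ^ (s + i)\<bar> \<le> 1" "\<bar>y ^ (s + j)\<bar> \<le> 1" using x y by (auto simp: power_abs[symmetric] intro!: power_le_one)
  have b1: "\<bar>((1 - x) / (1 + x)) ^ t\<bar> \<le> 1" "\<bar>((1 - y) / (1 + y)) ^ t\<bar> \<le> 1"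
    using x y by (auto intro!: power_le_one simp: power_abs[symmetric])
  define A where "A = \<bar>x ^ (s + i)\<bar>"
  define B where "B = \<bar>y ^ (s + j)\<bar>"
  define C where "C = \<bar>((1 - x) / (1 + x)) ^ t\<bar>"
  define D where "D = \<bar>((1 - y) / (1 + y)) ^ t\<bar>"
  have ABCD: "A * B * C * D \<le> 1"
    using a1 b1 unfolding A_def B_def C_def D_def
    by (intro mult_le_one) (simp_all add: mult_le_one)
  have "\<bar>Fm s t i j p\<bar> = (A * B * C * D) * (1 / (x + y))"
    using x y by (simp add: Fm_def p abs_mult A_def B_def C_def D_def)
  also have "\<dots> \<le> 1 * (1 / (x + y))"
    using ABCD x y by (intro mult_right_mono) auto
  also have "\<dots> \<le> x powr (-1/2) * y powr (-1/2)" using sqrt_bound[OF x(1) y(1)] by simp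
  finally show ?thesis using p by simp
qed

lemma Fm_integrable: "set_integrable lborel Sq (Fm s t i j)"
proof (rule set_integrable_bound[OF set_prod(1)[OF int_powr int_powr]])
  show "set_borel_measurable lborel Sq (Fm s t i j)"
  proof -
    have "(\<lambda>x. indicator Sq x *\<^sub>R Fm s t i j x) \<in> borel_measurable (lborel \<Otimes>\<^sub>M lborel)"
      unfolding Fm_def by measurable
    then show ?thesis unfolding set_borel_measurable_def by (simp add: lborel_prod)
  qed
  show "AE x in lborel. x \<in> Sq \<longrightarrow> norm (Fm s t i j x) \<le> norm (fst x powr (-1/2) * snd x powr (-1/2))"
    using Fm_bound by auto
qed

lemma Sq_sets: "Sq \<in> sets lborel"
  by (simp add: borel_open open_Times)

lemma Gf_integrable: "set_integrable lborel {0<..<1::real} (Gf s t i)"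
proof -
  have "continuous_on {0..1::real} (Gf s t i)"
    unfolding Gf_def by (intro continuous_intros) auto
  then have "set_integrable lborel {0..1::real} (Gf s t i)"
    unfolding set_integrable_def by (rule borel_integrable_compact[OF compact_Icc])
  then show ?thesis by (rule set_integrable_subset) auto
qed

lemma Fm_pt:
  assumes "p \<in> Sq"
  shows "Fm s t i j p = Fm s (Suc t) i j p + 2 * (Gf s t i (fst p) * Gf s t j (snd p))"
proof -
  obtain x y where p: "p = (x, y)" and x: "0 < x" "x < 1" and y: "0 < y" "y < 1" using assms by auto
  define A where "A = (1 - x) / (1 + x)"
  define B where "B = (1 - y) / (1 + y)"
  define D where "D = (1 + x) * (1 + y)"
  have D: "D > 0" using x y unfolding D_def by simp
  have xy: "x + y > 0" using x y by simp
  have num: "(1 - x) * (1 - y) = D - 2 * (x + y)" unfolding D_def by (simp add: algebra_simps)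
  have "A * B = (1 - x) * (1 - y) / D" unfolding A_def B_def D_def by simp
  also have "\<dots> = 1 - 2 * (x + y) / D" using D by (simp add: num diff_divide_distrib)
  finally have AB: "A * B = 1 - 2 * (x + y) / D" .
  have "A * B / (x + y) = 1 / (x + y) - 2 / D"
  proof -
    have h: "(2 * c / D) / c = 2 / D" if "c \<noteq> 0" for c using D that by (simp add: field_simps)
    show ?thesis unfolding AB using h[of "x + y"] xy by (simp add: diff_divide_distrib)
  qed
  then have core: "1 / (x + y) = A * B / (x + y) + 2 / ((1 + x) * (1 + y))"
    unfolding D_def by simp
  have "Fm s t i j p = (x ^ (s + i) * y ^ (s + j) * A ^ t * B ^ t) * (1 / (x + y))"
    by (simp add: Fm_def p A_def B_def)
  also have "\<dots> = (x ^ (s + i) * y ^ (s + j) * A ^ t * B ^ t) * (A * B / (x + y) + 2 / ((1 + x) * (1 + y)))"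
    using core by simp
  also have "\<dots> = Fm s (Suc t) i j p + 2 * (Gf s t i (fst p) * Gf s t j (snd p))"
  proof -
    have gen: "(X * Y * A' ^ t * B' ^ t) * (A' * B' / u + 2 / (v * w))
        = X * Y / u * A' ^ Suc t * B' ^ Suc t + 2 * (X / v * A' ^ t * (Y / w * B' ^ t))"
      if "u \<noteq> 0" "v \<noteq> 0" "w \<noteq> 0" for X Y A' B' u v w :: real
      using that by (simp add: field_simps)
    have F1: "Fm s (Suc t) i j p = x ^ (s + i) * y ^ (s + j) / (x + y) * A ^ Suc t * B ^ Suc t"
      by (simp add: Fm_def p A_def B_def)
    have G1: "Gf s t i (fst p) = x ^ (s + i) / (1 + x) * A ^ t" by (simp add: Gf_def p A_def)
    have G2: "Gf s t j (snd p) = y ^ (s + j) / (1 + y) * B ^ t" by (simp add: Gf_def p B_def)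
    show ?thesis unfolding F1 G1 G2 using x y by (intro gen) auto
  qed
  finally show ?thesis .
qed

lemma mom_rec: "mom s t i j = mom s (Suc t) i j + phi s t i * phi s t j"
proof -
  have I1: "set_integrable lborel Sq (Fm s (Suc t) i j)" by (rule Fm_integrable)
  have I2: "set_integrable lborel Sq (\<lambda>p. Gf s t i (fst p) * Gf s t j (snd p))"
    by (rule set_prod(1)[OF Gf_integrable Gf_integrable])
  have "mom s t i j = (LINT p : Sq | lborel. Fm s (Suc t) i j p + 2 * (Gf s t i (fst p) * Gf s t j (snd p)))"
    unfolding mom_Fm by (rule set_lebesgue_integral_cong[OF Sq_sets]) (use Fm_pt in blast)
  also have "\<dots> = mom s (Suc t) i j + 2 * ((LINT x : {0<..<1} | lborel. Gf s t i x) * (LINT x : {0<..<1} | lborel. Gf s t j x))"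
    using I1 I2 by (simp add: mom_Fm set_prod(2)[OF Gf_integrable Gf_integrable])
  also have "\<dots> = mom s (Suc t) i j + phi s t i * phi s t j"
    by (simp add: phi_Gf)
  finally show ?thesis .
qed

lemma Fm_lim: assumes pS: "p \<in> Sq" shows "(\<lambda>T. Fm s T i j p) \<longlonglongrightarrow> 0"
proof -
  obtain x y where p: "p = (x, y)" and x: "0 < x" "x < 1" and y: "0 < y" "y < 1" using pS by auto
  define c where "c = x ^ (s + i) * y ^ (s + j) / (x + y)"
  define r where "r = ((1 - x) / (1 + x)) * ((1 - y) / (1 + y))"
  have r: "norm r < 1"
  proof -
    have "0 \<le> (1 - x) / (1 + x)" "(1 - x) / (1 + x) < 1" "0 \<le> (1 - y) / (1 + y)" "(1 - y) / (1 + y) < 1"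
      using x y by auto
    then have "0 \<le> r" "r < 1" unfolding r_def
    proof -
      assume a: "0 \<le> (1 - x) / (1 + x)" "(1 - x) / (1 + x) < 1" "0 \<le> (1 - y) / (1 + y)" "(1 - y) / (1 + y) < 1"
      have "(1 - x) / (1 + x) * ((1 - y) / (1 + y)) \<le> 1 * ((1 - y) / (1 + y))"
        using a by (intro mult_right_mono) auto
      then show "(1 - x) / (1 + x) * ((1 - y) / (1 + y)) < 1"
        using a(4) by linarith
      show "0 \<le> (1 - x) / (1 + x) * ((1 - y) / (1 + y))" by (rule mult_nonneg_nonneg[OF a(1) a(3)])
    qed
    then show ?thesis by simp
  qed
  have eq: "Fm s T i j p = c * r ^ T" for T
    by (simp add: Fm_def p c_def r_def power_mult_distrib[symmetric])
  show ?thesis unfolding eq by (intro tendsto_mult_right_zero LIMSEQ_power_zero r)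
qed

lemma mom_lim: "(\<lambda>T. mom s T i j) \<longlonglongrightarrow> 0"
proof -
  define W where "W p = indicator Sq p *\<^sub>R (fst p powr (-1/2) * snd p powr (-1/2))" for p :: "real \<times> real"
  have W: "integrable lborel W"
    using set_prod(1)[OF int_powr int_powr] unfolding set_integrable_def W_def by simp
  have m0: "(\<lambda>p. 0::real) \<in> borel_measurable lborel" by simp
  have mT: "(\<lambda>p. indicator Sq p *\<^sub>R Fm s T i j p) \<in> borel_measurable lborel" for T
    using Fm_integrable[of s T i j] unfolding set_integrable_def by (rule borel_measurable_integrable)
  have lim: "AE p in lborel. (\<lambda>T. indicator Sq p *\<^sub>R Fm s T i j p) \<longlonglongrightarrow> 0"
  proof (rule AE_I2)
    fix p :: "real \<times> real"
    show "(\<lambda>T. indicator Sq p *\<^sub>R Fm s T i j p) \<longlonglongrightarrow> 0"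
    proof (cases "p \<in> Sq")
      case True then show ?thesis using Fm_lim[OF True] by simp
    next
      case False then show ?thesis by simp
    qed
  qed
  have bnd: "AE p in lborel. norm (indicator Sq p *\<^sub>R Fm s T i j p) \<le> W p" for T
  proof (rule AE_I2)
    fix p :: "real \<times> real"
    show "norm (indicator Sq p *\<^sub>R Fm s T i j p) \<le> W p"
    proof (cases "p \<in> Sq")
      case True
      have "0 \<le> fst p powr (-1/2) * snd p powr (-1/2)" by simp
      then show ?thesis using Fm_bound[OF True, of s T i j] True by (simp add: W_def)
    next
      case False then show ?thesis by (simp add: W_def)
    qed
  qed
  have "(\<lambda>T. integral\<^sup>L lborel (\<lambda>p. indicator Sq p *\<^sub>R Fm s T i j p)) \<longlonglongrightarrow> integral\<^sup>L lborel (\<lambda>p. 0::real)"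
    using integral_dominated_convergence[OF m0 mT W lim bnd] by simp
  then show ?thesis by (simp add: mom_Fm set_lebesgue_integral_def)
qed

definition Aa :: "real \<Rightarrow> real" where "Aa x = (1 - x) / (1 + x)"

lemma cont_Gf: "continuous_on {0..1::real} (Gf s k i)"
  unfolding Gf_def by (intro continuous_intros) auto

lemma cont_Aa: "continuous_on {0..1::real} Aa"
  unfolding Aa_def by (intro continuous_intros) auto

lemma LINT_HK:
  fixes f :: "real \<Rightarrow> real"
  assumes "continuous_on {0..1::real} f"
  shows "(LINT x : {0<..<1} | lborel. f x) = integral {0..1} f"
proof -
  have "set_integrable lborel {0..1::real} f"
    using assms unfolding set_integrable_def by (rule borel_integrable_compact[OF compact_Icc])
  then have si: "set_integrable lborel {0<..<1::real} f" by (rule set_integrable_subset) auto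
  show ?thesis using set_borel_integral_eq_integral(2)[OF si] integral_open_interval_real[of 0 1 f] by simp
qed

lemma phi_HK: "phi s k i = sqrt 2 * integral {0..1} (Gf s k i)"
  using phi_Gf LINT_HK[OF cont_Gf] by simp

lemma psi_zero:
  fixes c :: "nat \<Rightarrow> real"
  assumes h: "\<And>k. k \<ge> t \<Longrightarrow> (\<Sum>i<N. c i * phi s k i) = 0"
  assumes iN: "i < N"
  shows "c i = 0"
proof -
  define g where "g x = (\<Sum>i<N. c i * x ^ (s + i)) / (1 + x)" for x :: real
  have cont_g: "continuous_on {0..1} g"
    unfolding g_def by (intro continuous_intros) auto
  have gk: "integral {0..1} (\<lambda>x. g x * Aa x ^ k) = 0" if "k \<ge> t" for k
  proof -
    have int: "(\<lambda>x. c i * Gf s k i x) integrable_on {0..1}" for i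
      by (intro integrable_continuous_interval continuous_intros cont_Gf)
    have "(\<Sum>i<N. c i * phi s k i) = sqrt 2 * integral {0..1} (\<lambda>x. \<Sum>i<N. c i * Gf s k i x)"
      by (simp add: phi_HK integral_sum[OF _ int] sum_distrib_left mult_ac)
    also have "(\<lambda>x. \<Sum>i<N. c i * Gf s k i x) = (\<lambda>x. g x * Aa x ^ k)"
    proof (rule ext)
      fix x :: real
      have t: "c i * Gf s k i x = (c i * x ^ (s + i)) / (1 + x) * Aa x ^ k" for i
        by (simp add: Gf_def Aa_def)
      show "(\<Sum>i<N. c i * Gf s k i x) = g x * Aa x ^ k"
        unfolding t g_def by (simp add: sum_distrib_right[symmetric] sum_divide_distrib[symmetric])
    qed
    finally show ?thesis using h[OF that] by simp
  qed
  define D where "D = s + N"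
  define Rp :: "real poly" where
    "Rp = Polynomial.smult (1/2) ([:1, 1:] * (\<Sum>i<N. Polynomial.smult (c i) ([:1, -1:] ^ (s + i) * [:1, 1:] ^ (D - (s + i)))))"
  have p1: "poly [:1, -1:] y = 1 - y" "poly [:1, 1:] y = 1 + y" for y :: real by simp_all
  have Rpx: "poly Rp (Aa x) = g x * (1 + Aa x) ^ D" if x0: "0 \<le> x" for x
  proof -
    define a where "a = Aa x"
    have e1: "1 - a = x * (1 + a)" using x0 unfolding a_def Aa_def by (simp add: field_simps)
    have e2: "(1/2) * (1 + a) = 1 / (1 + x)" using x0 unfolding a_def Aa_def by (simp add: field_simps)
    have e3: "(1 - a) ^ (s + i) * (1 + a) ^ (D - (s + i)) = x ^ (s + i) * (1 + a) ^ D" if "i < N" for i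
    proof -
      have "(1 - a) ^ (s + i) = x ^ (s + i) * (1 + a) ^ (s + i)" by (simp add: e1 power_mult_distrib)
      moreover have "(1 + a) ^ (s + i) * (1 + a) ^ (D - (s + i)) = (1 + a) ^ D"
        using that unfolding D_def by (simp add: power_add[symmetric])
      ultimately show ?thesis by (simp add: mult.assoc)
    qed
    have "poly Rp a = (1/2) * (1 + a) * (\<Sum>i<N. c i * ((1 - a) ^ (s + i) * (1 + a) ^ (D - (s + i))))"
      unfolding Rp_def by (simp add: poly_sum p1 del: pCons_one) (simp only: distrib_right mult_1_left)
    also have "\<dots> = 1 / (1 + x) * (\<Sum>i<N. c i * (x ^ (s + i) * (1 + a) ^ D))"
    proof -
      have "(\<Sum>i<N. c i * ((1 - a) ^ (s + i) * (1 + a) ^ (D - (s + i)))) = (\<Sum>i<N. c i * (x ^ (s + i) * (1 + a) ^ D))"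
        by (rule sum.cong) (simp_all add: e3)
      then show ?thesis by (simp only: e2)
    qed
    also have "\<dots> = g x * (1 + a) ^ D"
    proof -
      have "(\<Sum>i<N. c i * (x ^ (s + i) * (1 + a) ^ D)) = (\<Sum>i<N. c i * x ^ (s + i)) * (1 + a) ^ D"
        by (simp add: sum_distrib_right mult.assoc)
      then show ?thesis unfolding g_def by simp
    qed
    finally show ?thesis unfolding a_def .
  qed
  have contA: "continuous_on {0..1} (\<lambda>x. g x * Aa x ^ k)" for k
    by (intro continuous_intros cont_g cont_Aa)
  have hint: "integral {0..1} (\<lambda>x. g x * Aa x ^ t * poly Rp (Aa x)) = 0"
  proof -
    have "(\<lambda>x. g x * Aa x ^ t * poly Rp (Aa x)) = (\<lambda>x. \<Sum>j\<le>degree Rp. coeff Rp j * (g x * Aa x ^ (t + j)))"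
    proof (rule ext)
      fix x
      show "g x * Aa x ^ t * poly Rp (Aa x) = (\<Sum>j\<le>degree Rp. coeff Rp j * (g x * Aa x ^ (t + j)))"
        unfolding poly_altdef sum_distrib_left
        by (rule sum.cong) (simp_all add: power_add ac_simps)
    qed
    then have "integral {0..1} (\<lambda>x. g x * Aa x ^ t * poly Rp (Aa x)) = (\<Sum>j\<le>degree Rp. coeff Rp j * integral {0..1} (\<lambda>x. g x * Aa x ^ (t + j)))"
    proof -
      have "integral {0..1} (\<lambda>x. \<Sum>j\<le>degree Rp. coeff Rp j * (g x * Aa x ^ (t + j)))
          = (\<Sum>j\<le>degree Rp. integral {0..1} (\<lambda>x. coeff Rp j * (g x * Aa x ^ (t + j))))"
        by (rule integral_sum) (auto intro!: integrable_continuous_interval continuous_intros cont_g cont_Aa)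
      then show ?thesis by (simp add: \<open>(\<lambda>x. g x * Aa x ^ t * poly Rp (Aa x)) = _\<close>)
    qed
    also have "\<dots> = 0" using gk by simp
    finally show ?thesis .
  qed
  define hh where "hh x = g x ^ 2 * Aa x ^ t * (1 + Aa x) ^ D" for x
  have "integral {0..1} hh = integral {0..1} (\<lambda>x. g x * Aa x ^ t * poly Rp (Aa x))"
  proof (rule integral_cong)
    fix x :: real assume "x \<in> {0..1}"
    then have "0 \<le> x" by simp
    then show "hh x = g x * Aa x ^ t * poly Rp (Aa x)"
      by (simp add: hh_def Rpx[OF \<open>0 \<le> x\<close>] power2_eq_square ac_simps)
  qed
  then have hh0: "integral {0..1} hh = 0" using hint by simp
  have conth: "continuous_on {0..1} hh" unfolding hh_def by (intro continuous_intros cont_g cont_Aa)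
  have Aa_nn: "0 \<le> Aa x" if "x \<in> {0..1}" for x using that unfolding Aa_def by auto
  have hhI: "(hh has_integral 0) (cbox 0 1)"
    using integrable_integral[OF integrable_continuous_interval[OF conth]] hh0 by (simp add: cbox_interval)
  have hz: "hh x = 0" if "x \<in> {0<..<1}" for x
  proof (rule has_integral_0_cbox_imp_0[OF _ _ hhI])
    show "continuous_on (cbox 0 1) hh" using conth by (simp add: cbox_interval)
    show "0 \<le> hh y" if "y \<in> box 0 1" for y using that Aa_nn by (auto simp: hh_def box_real)
    show "box 0 (1::real) \<noteq> {}" by (simp add: box_real)
    show "x \<in> cbox 0 1" using that by (simp add: cbox_interval)
  qed
  define p where "p = (\<Sum>i<N. monom (c i) i)"
  have pz: "poly p x = 0" if x: "x \<in> {0<..<1}" for x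
  proof -
    have "Aa x > 0" using x unfolding Aa_def by auto
    then have nz: "Aa x ^ t * (1 + Aa x) ^ D \<noteq> 0" by simp
    have "g x ^ 2 * (Aa x ^ t * (1 + Aa x) ^ D) = 0" using hz[OF x] unfolding hh_def by (simp only: mult.assoc)
    then have "g x = 0" using nz by (metis mult_eq_0_iff zero_eq_power2)
    then have "(\<Sum>i<N. c i * x ^ (s + i)) = 0" using x unfolding g_def by auto
    then have "x ^ s * (\<Sum>i<N. c i * x ^ i) = 0" by (simp add: sum_distrib_left power_add mult_ac)
    then show ?thesis using x by (simp add: p_def poly_sum poly_monom)
  qed
  have "p = 0"
  proof (rule ccontr)
    assume "p \<noteq> 0"
    then have "finite {x. poly p x = 0}" by (rule poly_roots_finite)
    moreover have "{0<..<1::real} \<subseteq> {x. poly p x = 0}" using pz by auto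
    ultimately have "finite {0<..<1::real}" by (rule finite_subset[rotated])
    then show False using infinite_Ioo[of "0::real" 1] by simp
  qed
  then have "coeff p i = 0" by simp
  moreover have "coeff p i = c i" using iN by (simp add: p_def coeff_sum coeff_monom)
  ultimately show ?thesis by simp
qed

lemma tau_nz: "tau s t N \<noteq> 0"
proof
  assume d0: "tau s t N = 0"
  define M where "M = Matrix.mat N N (\<lambda>(i, j). mom s t i j)"
  have Mc: "M \<in> carrier_mat N N" unfolding M_def by simp
  obtain v where v: "v \<in> carrier_vec N" "v \<noteq> 0\<^sub>v N" "M *\<^sub>v v = 0\<^sub>v N"
    using d0 det_0_iff_vec_prod_zero_field[OF Mc] unfolding tau_def M_def by blast
  define c where "c i = v $ i" for i
  define Q where "Q T = (\<Sum>i<N. \<Sum>j<N. c i * c j * mom s T i j)" for T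
  define psi where "psi T = (\<Sum>i<N. c i * phi s T i)" for T
  have row0: "(\<Sum>j<N. mom s t i j * c j) = 0" if "i < N" for i
  proof -
    have "(M *\<^sub>v v) $ i = 0" using v(3) that by simp
    moreover have "(M *\<^sub>v v) $ i = (\<Sum>j<N. mom s t i j * c j)"
      using that v(1) unfolding M_def by (simp add: scalar_prod_def c_def atLeast0LessThan)
    ultimately show ?thesis by simp
  qed
  have Qt: "Q t = 0"
  proof -
    have "Q t = (\<Sum>i<N. c i * (\<Sum>j<N. mom s t i j * c j))"
      unfolding Q_def by (simp add: sum_distrib_left ac_simps)
    then show ?thesis using row0 by simp
  qed
  have Qrec: "Q T = Q (Suc T) + (psi T)^2" for T
  proof -
    have "Q T = (\<Sum>i<N. \<Sum>j<N. c i * c j * mom s (Suc T) i j + (c i * phi s T i) * (c j * phi s T j))"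
      unfolding Q_def by (intro sum.cong refl) (simp add: mom_rec[of s T] algebra_simps)
    also have "\<dots> = Q (Suc T) + (\<Sum>i<N. \<Sum>j<N. (c i * phi s T i) * (c j * phi s T j))"
      by (simp add: Q_def sum.distrib)
    also have "(\<Sum>i<N. \<Sum>j<N. (c i * phi s T i) * (c j * phi s T j)) = (psi T)^2"
      by (simp add: psi_def power2_eq_square sum_product)
    finally show ?thesis .
  qed
  have Qlim0: "(\<lambda>T. Q T) \<longlonglongrightarrow> (\<Sum>i<N. \<Sum>j<N. c i * c j * 0)"
    unfolding Q_def by (intro tendsto_intros mom_lim)
  then have Qlim: "Q \<longlonglongrightarrow> 0" by simp
  have Qsum: "Q t = Q (t + K) + (\<Sum>k<K. (psi (t + k))^2)" for K
  proof (induction K)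
    case (Suc K)
    show ?case using Suc.IH Qrec[of "t + K"] by simp
  qed simp
  have lim2: "(\<lambda>K. - Q (t + K)) \<longlonglongrightarrow> 0"
    using tendsto_minus[OF LIMSEQ_ignore_initial_segment[OF Qlim, of t]] by (simp add: add.commute)
  have psi0: "psi k = 0" if "k \<ge> t" for k
  proof -
    define k0 where "k0 = k - t"
    have k: "k = t + k0" using that by (simp add: k0_def)
    have bnd: "\<forall>K\<ge>Suc k0. (psi k)^2 \<le> - Q (t + K)"
    proof (intro allI impI)
      fix K assume K: "K \<ge> Suc k0"
      have "- Q (t + K) = (\<Sum>k<K. (psi (t + k))^2)" using Qsum[of K] Qt by linarith
      moreover have "(psi (t + k0))^2 \<le> (\<Sum>k<K. (psi (t + k))^2)"
        by (rule member_le_sum[where f="\<lambda>k. (psi (t + k))^2"]) (use K in auto)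
      ultimately show "(psi k)^2 \<le> - Q (t + K)" using k by simp
    qed
    have "(psi k)^2 \<le> 0"
      by (rule LIMSEQ_le_const[OF lim2], rule exI[of _ "Suc k0"], rule bnd)
    then show ?thesis by simp
  qed
  have "c i = 0" if "i < N" for i
    by (rule psi_zero[where t=t and N=N and c=c and s=s and i=i]) (use psi0 that in \<open>simp_all add: psi_def\<close>)
  then have "v = 0\<^sub>v N" using v(1) by (intro eq_vecI) (auto simp: c_def)
  then show False using v(2) by simp
qed


lemma Pn_eq: "Pn s t n x = det (bmat (mom s t) n (\<lambda>i. x ^ i)) / tau s t n"
proof (cases "n = 0")
  case True
  have "det (bmat (mom s t) 0 (\<lambda>i. x ^ i)) = tau s t 0"
    using L1[of "mom s t" 0 "\<lambda>i. x ^ i"] L3[of "mom s t" 0] by (simp add: tau_def)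
  then show ?thesis using True tau_nz[of s t 0] by (simp add: Pn_def)
next
  case False
  then show ?thesis by (simp add: Pn_def bmat_def)
qed

lemma sigma_eq: "sigma s t n = det (bmat (mom s t) n (phi s t))"
  by (simp add: sigma_def bmat_def)

lemma tau_eq: "tau s t n = det (Matrix.mat n n (\<lambda>(i, j). mom s t i j))"
  by (simp add: tau_def)

theorem theorem2p9:
  fixes s t n :: nat and x :: real
  assumes "n \<ge> 1" and "sigma s t (n - 1) \<noteq> 0"
  shows "Pn s (Suc t) n x + dcoef s t n * Pn s (Suc t) (n - 1) x
         = Pn s t n x + ecoef s t n * Pn s t (n - 1) x"
proof -
  obtain m where n: "n = Suc m" using assms(1) by (cases n) auto
  have FF: "\<And>i j. mom s (Suc t) i j = mom s t i j - phi s t i * phi s t j"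
    subgoal for i j using mom_rec[of s t i j] by linarith
    done
  have sm: "det (bmat (mom s t) m (phi s t)) \<noteq> 0" using assms(2) n by (simp add: sigma_eq)
  note main = alg_main[where m=m and X="\<lambda>i. x ^ i", OF FF tau_nz[of s t "Suc m", unfolded tau_eq]
      tau_nz[of s t m, unfolded tau_eq] tau_nz[of s "Suc t" "Suc m", unfolded tau_eq]
      tau_nz[of s "Suc t" m, unfolded tau_eq] sm]
  show ?thesis
    unfolding n Pn_eq dcoef_def ecoef_def sigma_eq tau_eq using main by simp
qed

end
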